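(* If a positive-dimensional complex quasi-projective variety $X$ is pseudo Brody hyperbolic, then $X$ is not $h$-special.
   Context: $X$ is pseudo Brody hyperbolic if there is a proper Zariski closed subset $E\subsetneq X$ such that every non-constant holomorphic map $f:\mathbb{C}\to X$ satisfies $f(\mathbb{C})\subset E$. For $x,y\in X$, $x\sim y$ iff there exist holomorphic maps $f_1,\dots,f_l:\mathbb{C}\to X$ such that, with $Z_i$ the Zariski closure of $f_i(\mathbb{C})$, $x\in Z_1$, $Z_i\cap Z_{i+1}\ne\emptyset$ for $1\le i<l$, and $y\in Z_l$; $X$ is $h$-special iff $\{(x,y):x\sim y\}$ is Zariski dense in $X\times X$. *)

theory Defs
  imports "HOL-Analysis.Analysis"
begin

text \<open>Model of complex projective space P^N (N+1 = CARD('n)): a point is represented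
by its nonzero homogeneous coordinate vectors in complex^'n; subsets of P^N are
represented as cones (sets of nonzero vectors stable under nonzero scaling).\<close>

definition monomial :: "('n::finite \<Rightarrow> nat) \<Rightarrow> complex^'n \<Rightarrow> complex" where
  "monomial e x = (\<Prod>i\<in>UNIV. (x $ i) ^ e i)"

definition hom_poly :: "nat \<Rightarrow> (complex^'n::finite \<Rightarrow> complex) \<Rightarrow> bool" where
  "hom_poly d p \<longleftrightarrow> (\<exists>M :: ('n \<Rightarrow> nat) \<Rightarrow> complex.
      finite {e. M e \<noteq> 0} \<and> (\<forall>e. M e \<noteq> 0 \<longrightarrow> sum e UNIV = d) \<and>
      p = (\<lambda>x. \<Sum>e\<in>{e. M e \<noteq> 0}. M e * monomial e x))"

definition proj_closed :: "(complex^'n::finite) set \<Rightarrow> bool" where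
  "proj_closed A \<longleftrightarrow> (\<exists>F :: (nat \<times> (complex^'n \<Rightarrow> complex)) set.
      (\<forall>(d,p)\<in>F. hom_poly d p) \<and> A = {x. x \<noteq> 0 \<and> (\<forall>(d,p)\<in>F. p x = 0)})"

definition proj_closure :: "(complex^'n::finite) set \<Rightarrow> (complex^'n) set" where
  "proj_closure A = \<Inter>{C. proj_closed C \<and> A \<subseteq> C}"

definition bihom_poly :: "(complex^'n::finite \<Rightarrow> complex^'n \<Rightarrow> complex) \<Rightarrow> bool" where
  "bihom_poly p \<longleftrightarrow> (\<exists>d1 d2. \<exists>M :: (('n \<Rightarrow> nat) \<times> ('n \<Rightarrow> nat)) \<Rightarrow> complex.
      finite {ef. M ef \<noteq> 0} \<and>
      (\<forall>e f. M (e,f) \<noteq> 0 \<longrightarrow> sum e UNIV = d1 \<and> sum f UNIV = d2) \<and>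
      p = (\<lambda>x y. \<Sum>ef\<in>{ef. M ef \<noteq> 0}. M ef * monomial (fst ef) x * monomial (snd ef) y))"

definition proj2_closed :: "((complex^'n::finite) \<times> (complex^'n)) set \<Rightarrow> bool" where
  "proj2_closed A \<longleftrightarrow> (\<exists>F. (\<forall>p\<in>F. bihom_poly p) \<and>
      A = {(x,y). x \<noteq> 0 \<and> y \<noteq> 0 \<and> (\<forall>p\<in>F. p x y = 0)})"

definition proj2_closure :: "((complex^'n::finite) \<times> (complex^'n)) set \<Rightarrow> _ set" where
  "proj2_closure A = \<Inter>{C. proj2_closed C \<and> A \<subseteq> C}"

definition locally_closed_proj :: "(complex^'n::finite) set \<Rightarrow> bool" where
  "locally_closed_proj X \<longleftrightarrow> (\<exists>A B. proj_closed A \<and> proj_closed B \<and> X = A - B)"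

definition zar_irreducible :: "(complex^'n::finite) set \<Rightarrow> bool" where
  "zar_irreducible S \<longleftrightarrow> S \<noteq> {} \<and>
     (\<forall>A B. proj_closed A \<and> proj_closed B \<and> S \<subseteq> A \<union> B \<longrightarrow> S \<subseteq> A \<or> S \<subseteq> B)"

definition quasi_projective_variety :: "(complex^'n::finite) set \<Rightarrow> bool" where
  "quasi_projective_variety X \<longleftrightarrow> locally_closed_proj X \<and> zar_irreducible X"

definition closed_in_X :: "(complex^'n::finite) set \<Rightarrow> (complex^'n) set \<Rightarrow> bool" where
  "closed_in_X X E \<longleftrightarrow> (\<exists>C. proj_closed C \<and> E = X \<inter> C)"

definition positive_dimensional :: "(complex^'n::finite) set \<Rightarrow> bool" where
  "positive_dimensional X \<longleftrightarrow> (\<exists>Z0 Z1. closed_in_X X Z0 \<and> closed_in_X X Z1 \<and>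
      zar_irreducible Z0 \<and> zar_irreducible Z1 \<and> Z0 \<subset> Z1)"

text \<open>Holomorphic maps C -> X, given by a nowhere-vanishing holomorphic lift
C -> C^(N+1) (every holomorphic map C -> P^N admits such a lift).\<close>
definition holo_curve :: "(complex^'n::finite) set \<Rightarrow> (complex \<Rightarrow> complex^'n) \<Rightarrow> bool" where
  "holo_curve X g \<longleftrightarrow> (\<forall>i. (\<lambda>z. g z $ i) holomorphic_on UNIV) \<and> (\<forall>z. g z \<noteq> 0 \<and> g z \<in> X)"

definition proj_eq :: "complex^'n::finite \<Rightarrow> complex^'n \<Rightarrow> bool" where
  "proj_eq x y \<longleftrightarrow> (\<exists>c::complex. c \<noteq> 0 \<and> y = (\<chi> i. c * x $ i))"

definition nonconstant_curve :: "(complex \<Rightarrow> complex^'n::finite) \<Rightarrow> bool" where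
  "nonconstant_curve g \<longleftrightarrow> (\<exists>z w. \<not> proj_eq (g z) (g w))"

definition pseudo_brody_hyperbolic :: "(complex^'n::finite) set \<Rightarrow> bool" where
  "pseudo_brody_hyperbolic X \<longleftrightarrow> (\<exists>E. closed_in_X X E \<and> E \<noteq> X \<and>
      (\<forall>g. holo_curve X g \<and> nonconstant_curve g \<longrightarrow> range g \<subseteq> E))"

definition curve_closure :: "(complex^'n::finite) set \<Rightarrow> (complex \<Rightarrow> complex^'n) \<Rightarrow> (complex^'n) set" where
  "curve_closure X g = X \<inter> proj_closure (range g)"

definition h_rel :: "(complex^'n::finite) set \<Rightarrow> complex^'n \<Rightarrow> complex^'n \<Rightarrow> bool" where
  "h_rel X x y \<longleftrightarrow> (\<exists>l::nat. \<exists>gs :: nat \<Rightarrow> complex \<Rightarrow> complex^'n. l \<ge> 1 \<and>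
      (\<forall>i<l. holo_curve X (gs i)) \<and>
      x \<in> curve_closure X (gs 0) \<and>
      (\<forall>i. i + 1 < l \<longrightarrow> curve_closure X (gs i) \<inter> curve_closure X (gs (i+1)) \<noteq> {}) \<and>
      y \<in> curve_closure X (gs (l - 1)))"

definition h_special :: "(complex^'n::finite) set \<Rightarrow> bool" where
  "h_special X \<longleftrightarrow> (X \<times> X) \<subseteq> proj2_closure {(x,y). x \<in> X \<and> y \<in> X \<and> h_rel X x y}"

end

theory Submission imports Defs begin

definition unitv :: "'n \<Rightarrow> 'n \<Rightarrow> nat" where "unitv i = (\<lambda>k. if k = i then 1 else 0)"

lemma mono_unit: "monomial (unitv i) (x::complex^'n::finite) = x $ i"
  unfolding monomial_def unitv_def
proof -
  have "(\<Prod>k\<in>UNIV. (x $ k) ^ (if k = i then 1 else 0)) = (\<Prod>k\<in>UNIV. if k = i then x $ k else 1)"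
    by (rule prod.cong) auto
  also have "\<dots> = x $ i" by (simp add: prod.delta)
  finally show "(\<Prod>k\<in>UNIV. (x $ k) ^ (if k = i then 1 else 0)) = x $ i" .
qed

lemma sum_unitv: "sum (unitv (i::'n::finite)) UNIV = 1"
  unfolding unitv_def by (simp add: sum.delta)

lemma mono_add: "monomial (\<lambda>k. e k + e' k) (x::complex^'n::finite) = monomial e x * monomial e' x"
  unfolding monomial_def by (simp add: power_add prod.distrib)

lemma mono_scale: "monomial e (\<chi> i. c * (x::complex^'n::finite) $ i) = c ^ (sum e UNIV) * monomial e x"
  unfolding monomial_def by (simp add: power_mult_distrib prod.distrib power_sum)

lemma hom_scale: assumes "hom_poly d p" shows "p (\<chi> i. c * (x::complex^'n::finite) $ i) = c ^ d * p x"
proof -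
  obtain M where M: "finite {e. M e \<noteq> 0}" "\<forall>e. M e \<noteq> 0 \<longrightarrow> sum e UNIV = d"
      "p = (\<lambda>x. \<Sum>e\<in>{e. M e \<noteq> 0}. M e * monomial e x)"
    using assms unfolding hom_poly_def by blast
  show ?thesis unfolding M(3) mono_scale sum_distrib_left
    by (rule sum.cong) (use M(2) in auto)
qed

lemma hom_from_index:
  fixes \<iota> :: "'a \<Rightarrow> ('n::finite \<Rightarrow> nat)"
  assumes "finite I" "\<forall>k\<in>I. sum (\<iota> k) UNIV = d"
  shows "hom_poly d (\<lambda>x::complex^'n. \<Sum>k\<in>I. c k * monomial (\<iota> k) x)"
proof -
  define M where "M e = sum c {k \<in> I. \<iota> k = e}" for e
  have sub: "{e. M e \<noteq> 0} \<subseteq> \<iota> ` I"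
  proof
    fix e assume e: "e \<in> {e. M e \<noteq> 0}"
    show "e \<in> \<iota> ` I"
    proof (rule ccontr)
      assume "e \<notin> \<iota> ` I"
      then have "{k \<in> I. \<iota> k = e} = {}" by blast
      then have "M e = 0" by (simp only: M_def sum.empty)
      then show False using e by simp
    qed
  qed
  have fin: "finite {e. M e \<noteq> 0}" using sub assms(1) finite_subset by blast
  have deg: "\<forall>e. M e \<noteq> 0 \<longrightarrow> sum e UNIV = d" using sub assms(2) by blast
  have "(\<lambda>x::complex^'n. \<Sum>k\<in>I. c k * monomial (\<iota> k) x) = (\<lambda>x. \<Sum>e\<in>{e. M e \<noteq> 0}. M e * monomial e x)"
  proof
    fix x :: "complex^'n"
    have "(\<Sum>k\<in>I. c k * monomial (\<iota> k) x) = (\<Sum>e\<in>\<iota> ` I. \<Sum>k\<in>{k \<in> I. \<iota> k = e}. c k * monomial (\<iota> k) x)"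
      by (rule sum.image_gen[OF assms(1)])
    also have "\<dots> = (\<Sum>e\<in>\<iota> ` I. M e * monomial e x)"
      unfolding M_def sum_distrib_right by (rule sum.cong) auto
    also have "\<dots> = (\<Sum>e\<in>{e. M e \<noteq> 0}. M e * monomial e x)"
      by (rule sum.mono_neutral_right[OF finite_imageI[OF assms(1)] sub]) simp
    finally show "(\<Sum>k\<in>I. c k * monomial (\<iota> k) x) = (\<Sum>e\<in>{e. M e \<noteq> 0}. M e * monomial e x)" .
  qed
  then show ?thesis unfolding hom_poly_def using fin deg by blast
qed

lemma bihom_from_index:
  fixes \<iota> :: "'a \<Rightarrow> ('n::finite \<Rightarrow> nat) \<times> ('n \<Rightarrow> nat)"
  assumes "finite I" "\<forall>k\<in>I. sum (fst (\<iota> k)) UNIV = d1 \<and> sum (snd (\<iota> k)) UNIV = d2"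
  shows "bihom_poly (\<lambda>(x::complex^'n) y. \<Sum>k\<in>I. c k * monomial (fst (\<iota> k)) x * monomial (snd (\<iota> k)) y)"
proof -
  define M where "M e = sum c {k \<in> I. \<iota> k = e}" for e
  have sub: "{e. M e \<noteq> 0} \<subseteq> \<iota> ` I"
  proof
    fix e assume e: "e \<in> {e. M e \<noteq> 0}"
    show "e \<in> \<iota> ` I"
    proof (rule ccontr)
      assume "e \<notin> \<iota> ` I"
      then have "{k \<in> I. \<iota> k = e} = {}" by blast
      then have "M e = 0" by (simp only: M_def sum.empty)
      then show False using e by simp
    qed
  qed
  have fin: "finite {e. M e \<noteq> 0}" using sub assms(1) finite_subset by blast
  have deg: "\<forall>e f. M (e,f) \<noteq> 0 \<longrightarrow> sum e UNIV = d1 \<and> sum f UNIV = d2"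
  proof (intro allI impI)
    fix e f assume "M (e,f) \<noteq> 0"
    then have "(e,f) \<in> \<iota> ` I" using sub by blast
    then obtain k where k: "(e,f) = \<iota> k" "k \<in> I" by (rule imageE)
    then have "sum (fst (\<iota> k)) UNIV = d1 \<and> sum (snd (\<iota> k)) UNIV = d2" using assms(2) by blast
    then show "sum e UNIV = d1 \<and> sum f UNIV = d2" using k(1) by (metis fst_conv snd_conv)
  qed
  have "(\<lambda>(x::complex^'n) y. \<Sum>k\<in>I. c k * monomial (fst (\<iota> k)) x * monomial (snd (\<iota> k)) y)
     = (\<lambda>x y. \<Sum>ef\<in>{ef. M ef \<noteq> 0}. M ef * monomial (fst ef) x * monomial (snd ef) y)"
  proof (intro ext)
    fix x y :: "complex^'n"
    have "(\<Sum>k\<in>I. c k * monomial (fst (\<iota> k)) x * monomial (snd (\<iota> k)) y) = (\<Sum>e\<in>\<iota> ` I. \<Sum>k\<in>{k \<in> I. \<iota> k = e}. c k * monomial (fst (\<iota> k)) x * monomial (snd (\<iota> k)) y)"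
      by (rule sum.image_gen[OF assms(1)])
    also have "\<dots> = (\<Sum>e\<in>\<iota> ` I. M e * monomial (fst e) x * monomial (snd e) y)"
      unfolding M_def sum_distrib_right by (rule sum.cong) auto
    also have "\<dots> = (\<Sum>e\<in>{e. M e \<noteq> 0}. M e * monomial (fst e) x * monomial (snd e) y)"
      by (rule sum.mono_neutral_right[OF finite_imageI[OF assms(1)] sub]) simp
    finally show "(\<Sum>k\<in>I. c k * monomial (fst (\<iota> k)) x * monomial (snd (\<iota> k)) y) = (\<Sum>e\<in>{e. M e \<noteq> 0}. M e * monomial (fst e) x * monomial (snd e) y)" .
  qed
  note eq = this
  show ?thesis unfolding bihom_poly_def
    apply (rule exI[of _ d1], rule exI[of _ d2], rule exI[of _ M])
    using fin deg eq by blast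
qed
lemma proj_eq_par: "proj_eq (x::complex^'n::finite) y \<Longrightarrow> x$i*y$j = x$j*y$i"
  unfolding proj_eq_def by auto

lemma proj_eq_sym: "proj_eq (x::complex^'n::finite) y \<Longrightarrow> proj_eq y x"
  unfolding proj_eq_def
proof (elim exE conjE)
  fix c :: complex assume c: "c \<noteq> 0" "y = (\<chi> i. c * x $ i)"
  show "\<exists>c. c \<noteq> 0 \<and> x = (\<chi> i. c * y $ i)"
    by (rule exI[of _ "1/c"]) (use c in \<open>auto simp: vec_eq_iff\<close>)
qed

lemma proj_eq_trans: "proj_eq (x::complex^'n::finite) y \<Longrightarrow> proj_eq y z \<Longrightarrow> proj_eq x z"
  unfolding proj_eq_def
proof (elim exE conjE)
  fix c d :: complex assume c: "c \<noteq> 0" "y = (\<chi> i. c * x $ i)" "d \<noteq> 0" "z = (\<chi> i. d * y $ i)"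
  show "\<exists>c. c \<noteq> 0 \<and> z = (\<chi> i. c * x $ i)"
    by (rule exI[of _ "d*c"]) (use c in \<open>auto simp: vec_eq_iff\<close>)
qed

lemma par_proj_eq:
  assumes "(x::complex^'n::finite) \<noteq> 0" "y \<noteq> 0" "\<forall>i j. x$i*y$j = x$j*y$i"
  shows "proj_eq x y"
proof -
  obtain k where k: "x$k \<noteq> 0" using assms(1) by (metis vec_eq_iff zero_index)
  define c where "c = y$k / x$k"
  have yi: "y$i = c * x$i" for i
    using assms(3)[rule_format, of i k] k unfolding c_def by (simp add: field_simps)
  have "c \<noteq> 0"
  proof
    assume "c = 0" then have "y = 0" using yi by (simp add: vec_eq_iff)
    then show False using assms(2) by simp
  qed
  then show ?thesis unfolding proj_eq_def using yi by (auto simp: vec_eq_iff)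
qed

lemma proj_closed_cone:
  assumes "proj_closed C" "(x::complex^'n::finite) \<in> C" "c \<noteq> 0"
  shows "(\<chi> i. c * x $ i) \<in> C"
proof -
  obtain F where F: "\<forall>(d,p)\<in>F. hom_poly d p" "C = {x. x \<noteq> 0 \<and> (\<forall>(d,p)\<in>F. p x = 0)}"
    using assms(1) unfolding proj_closed_def by blast
  have nz: "(\<chi> i. c * x $ i) \<noteq> 0" using assms F(2)
    by (auto simp: vec_eq_iff)
  have "\<forall>(d,p)\<in>F. p (\<chi> i. c * x $ i) = 0"
  proof (intro ballI, clarify)
    fix d p assume "(d,p) \<in> F"
    then have "hom_poly d p" "p x = 0" using F assms(2) by auto
    then show "p (\<chi> i. c * x $ i) = 0" using hom_scale[of d p c x] by simp
  qed
  then show ?thesis using nz F(2) by auto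
qed

lemma closure_sub: "proj_closed C \<Longrightarrow> A \<subseteq> C \<Longrightarrow> proj_closure A \<subseteq> C"
  unfolding proj_closure_def by blast

lemma closure2_sub: "proj2_closed C \<Longrightarrow> A \<subseteq> C \<Longrightarrow> proj2_closure A \<subseteq> C"
  unfolding proj2_closure_def by blast

lemma minor_hom: "hom_poly 1 (\<lambda>x::complex^'n::finite. x$i*p$j - x$j*p$i)"
proof -
  have "hom_poly 1 (\<lambda>x::complex^'n. \<Sum>b\<in>(UNIV::bool set).
      (if b then p$j else - p$i) * monomial (if b then unitv i else unitv j) x)"
    by (rule hom_from_index) (auto simp: sum_unitv)
  moreover have "(\<lambda>x::complex^'n. \<Sum>b\<in>(UNIV::bool set).
      (if b then p$j else - p$i) * monomial (if b then unitv i else unitv j) x)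
     = (\<lambda>x. x$i*p$j - x$j*p$i)"
    by (auto simp: UNIV_bool mono_unit)
  ultimately show ?thesis by simp
qed

lemma line_closed: "proj_closed {x::complex^'n::finite. x \<noteq> 0 \<and> (\<forall>i j. x$i*p$j - x$j*p$i = 0)}"
  unfolding proj_closed_def
proof (rule exI[of _ "{(1, \<lambda>x. x$i*p$j - x$j*p$i) | i j. True}"], intro conjI)
  show "\<forall>(d, q)\<in>{(1, \<lambda>x. x$i*p$j - x$j*p$i) | i j. True}. hom_poly d q"
    using minor_hom by auto
  show "{x::complex^'n. x \<noteq> 0 \<and> (\<forall>i j. x$i*p$j - x$j*p$i = 0)} =
    {x. x \<noteq> 0 \<and> (\<forall>(d, q)\<in>{(1, \<lambda>x. x$i*p$j - x$j*p$i) | i j. True}. q x = 0)}"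
  proof (rule Collect_cong)
    fix x :: "complex^'n"
    have "(\<forall>(d, q)\<in>{(1::nat, \<lambda>x::complex^'n. x$i*p$j - x$j*p$i) | i j. True}. q x = 0)
       \<longleftrightarrow> (\<forall>i j. x$i*p$j - x$j*p$i = 0)"
    proof
      assume H: "\<forall>(d, q)\<in>{(1::nat, \<lambda>x::complex^'n. x$i*p$j - x$j*p$i) | i j. True}. q x = 0"
      show "\<forall>i j. x$i*p$j - x$j*p$i = 0"
      proof (intro allI)
        fix i j
        have "(1::nat, \<lambda>x::complex^'n. x$i*p$j - x$j*p$i) \<in> {(1::nat, \<lambda>x::complex^'n. x$i*p$j - x$j*p$i) | i j. True}" by blast
        then show "x$i*p$j - x$j*p$i = 0" using H by fastforce
      qed
    next
      assume "\<forall>i j. x$i*p$j - x$j*p$i = 0"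
      then show "\<forall>(d, q)\<in>{(1::nat, \<lambda>x::complex^'n. x$i*p$j - x$j*p$i) | i j. True}. q x = 0" by blast
    qed
    then show "(x \<noteq> 0 \<and> (\<forall>i j. x$i*p$j - x$j*p$i = 0)) = (x \<noteq> 0 \<and> (\<forall>(d, q)\<in>{(1, \<lambda>x. x$i*p$j - x$j*p$i) | i j. True}. q x = 0))"
      by simp
  qed
qed

lemma linef_bihom:
  assumes "hom_poly d f"
  shows "bihom_poly (\<lambda>(x::complex^'n::finite) y. f x * (x$i*y$j - x$j*y$i))"
proof -
  obtain M where M: "finite {e. M e \<noteq> 0}" "\<forall>e. M e \<noteq> 0 \<longrightarrow> sum e UNIV = d"
      "f = (\<lambda>x. \<Sum>e\<in>{e. M e \<noteq> 0}. M e * monomial e x)"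
    using assms unfolding hom_poly_def by blast
  define S where "S = {e. M e \<noteq> 0}"
  define \<iota> where "\<iota> = (\<lambda>(e::'n \<Rightarrow> nat, b::bool). if b then ((\<lambda>k. e k + unitv i k), unitv j)
                       else ((\<lambda>k. e k + unitv j k), unitv i))"
  define c where "c = (\<lambda>(e::'n \<Rightarrow> nat, b::bool). if b then M e else - M e)"
  have "bihom_poly (\<lambda>(x::complex^'n) y. \<Sum>k\<in>S \<times> UNIV. c k * monomial (fst (\<iota> k)) x * monomial (snd (\<iota> k)) y)"
    by (rule bihom_from_index[of _ _ "d+1" 1])
      (use M(1,2) in \<open>auto simp: S_def \<iota>_def sum.distrib sum_unitv\<close>)
  moreover have "(\<lambda>(x::complex^'n) y. \<Sum>k\<in>S \<times> UNIV. c k * monomial (fst (\<iota> k)) x * monomial (snd (\<iota> k)) y)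
     = (\<lambda>x y. f x * (x$i*y$j - x$j*y$i))"
  proof (intro ext)
    fix x y :: "complex^'n"
    have "(\<Sum>k\<in>S \<times> UNIV. c k * monomial (fst (\<iota> k)) x * monomial (snd (\<iota> k)) y)
        = (\<Sum>e\<in>S. \<Sum>b\<in>UNIV. c (e,b) * monomial (fst (\<iota> (e,b))) x * monomial (snd (\<iota> (e,b))) y)"
      by (subst sum.cartesian_product) (simp add: split_def)
    also have "\<dots> = (\<Sum>e\<in>S. M e * monomial e x * (x$i*y$j - x$j*y$i))"
      by (rule sum.cong) (auto simp: UNIV_bool c_def \<iota>_def mono_add mono_unit algebra_simps)
    also have "\<dots> = f x * (x$i*y$j - x$j*y$i)"
      unfolding M(3) S_def sum_distrib_right by simp
    finally show "(\<Sum>k\<in>S \<times> UNIV. c k * monomial (fst (\<iota> k)) x * monomial (snd (\<iota> k)) y)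
        = f x * (x$i*y$j - x$j*y$i)" .
  qed
  ultimately show ?thesis by simp
qed

lemma curve_case:
  assumes "holo_curve X g" "proj_closed C"
    and "\<forall>g. holo_curve X g \<and> nonconstant_curve g \<longrightarrow> range g \<subseteq> X \<inter> C"
  shows "curve_closure X g \<subseteq> C \<or> (\<forall>z \<in> curve_closure X g. proj_eq (g 0) z)"
proof (cases "nonconstant_curve g")
  case True
  then have "range g \<subseteq> C" using assms by blast
  then have "proj_closure (range g) \<subseteq> C" using closure_sub assms(2) by blast
  then show ?thesis unfolding curve_closure_def by blast
next
  case False
  then have pe: "proj_eq (g 0) (g z)" for z unfolding nonconstant_curve_def by blast
  have nz: "g z \<noteq> 0" for z using assms(1) unfolding holo_curve_def by blast
  let ?L = "{x::complex^_. x \<noteq> 0 \<and> (\<forall>i j. x$i*(g 0)$j - x$j*(g 0)$i = 0)}"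
  have "range g \<subseteq> ?L"
    using pe nz proj_eq_par[OF proj_eq_sym[OF pe]] by auto
  then have "proj_closure (range g) \<subseteq> ?L" using closure_sub line_closed by blast
  have "\<forall>z \<in> curve_closure X g. proj_eq (g 0) z"
  proof
    fix z assume "z \<in> curve_closure X g"
    then have zL: "z \<in> ?L" using \<open>proj_closure (range g) \<subseteq> ?L\<close> unfolding curve_closure_def by blast
    then have zn: "z \<noteq> 0" by blast
    have "\<forall>i j. (g 0)$i*z$j = (g 0)$j*z$i"
    proof (intro allI)
      fix i j
      have "z$j*(g 0)$i - z$i*(g 0)$j = 0" using zL by blast
      then show "(g 0)$i*z$j = (g 0)$j*z$i" by (simp add: algebra_simps)
    qed
    then show "proj_eq (g 0) z" using par_proj_eq[OF nz[of 0] zn] by blast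
  qed
  then show ?thesis by blast
qed

lemma chain:
  assumes "h_rel X x y" "proj_closed C"
    and "\<forall>g. holo_curve X g \<and> nonconstant_curve g \<longrightarrow> range g \<subseteq> X \<inter> C"
    and "\<forall>z\<in>C. f z = 0" "hom_poly d f"
  shows "f x = 0 \<or> proj_eq x y"
proof -
  obtain l :: nat and gs where l: "l \<ge> 1" "\<forall>i<l. holo_curve X (gs i)" "x \<in> curve_closure X (gs 0)"
    "\<forall>i. i + 1 < l \<longrightarrow> curve_closure X (gs i) \<inter> curve_closure X (gs (i+1)) \<noteq> {}"
    "y \<in> curve_closure X (gs (l - 1))"
    using assms(1) unfolding h_rel_def by blast
  have main: "k < l \<Longrightarrow> \<forall>z\<in>curve_closure X (gs k). f x = 0 \<or> proj_eq x z" for k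
  proof (induction k)
    case 0
    from curve_case[OF l(2)[rule_format, OF 0] assms(2,3)]
    show ?case
    proof
      assume "curve_closure X (gs 0) \<subseteq> C" then show ?thesis using l(3) assms(4) by blast
    next
      assume H0: "\<forall>z\<in>curve_closure X (gs 0). proj_eq (gs 0 0) z"
      show ?thesis
      proof
        fix z assume z: "z \<in> curve_closure X (gs 0)"
        have "proj_eq x (gs 0 0)" using proj_eq_sym H0 l(3) by blast
        moreover have "proj_eq (gs 0 0) z" using H0 z by blast
        ultimately have "proj_eq x z" by (rule proj_eq_trans)
        then show "f x = 0 \<or> proj_eq x z" by blast
      qed
    qed
  next
    case (Suc k)
    then have IH: "\<forall>z\<in>curve_closure X (gs k). f x = 0 \<or> proj_eq x z" by simp
    obtain w where w: "w \<in> curve_closure X (gs k)" "w \<in> curve_closure X (gs (Suc k))"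
      using l(4)[rule_format, of k] Suc.prems by auto
    from curve_case[OF l(2)[rule_format, OF Suc.prems] assms(2,3)]
    show ?case
    proof
      assume "curve_closure X (gs (Suc k)) \<subseteq> C"
      then have fw: "f w = 0" using w(2) assms(4) by blast
      have "f x = 0"
      proof (cases "f x = 0")
        case False
        then have "proj_eq x w" using IH w(1) by blast
        then obtain c where c: "c \<noteq> 0" "w = (\<chi> i. c * x $ i)" unfolding proj_eq_def by blast
        then have "f w = c ^ d * f x" using hom_scale[OF assms(5)] by simp
        then show ?thesis using fw c(1) by simp
      qed
      then show ?thesis by blast
    next
      assume A: "\<forall>z\<in>curve_closure X (gs (Suc k)). proj_eq (gs (Suc k) 0) z"
      show ?thesis
      proof
        fix z assume z: "z \<in> curve_closure X (gs (Suc k))"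
        have "f x = 0 \<or> proj_eq x w" using IH w(1) by blast
        moreover have "proj_eq w (gs (Suc k) 0)" using A w(2) proj_eq_sym by blast
        moreover have "proj_eq (gs (Suc k) 0) z" using A z by blast
        ultimately show "f x = 0 \<or> proj_eq x z" by (meson proj_eq_trans)
      qed
    qed
  qed
  have "l - 1 < l" using l(1) by simp
  then show ?thesis using main l(5) by blast
qed

theorem lemma4p6:
  fixes X :: "(complex^'n::finite) set"
  assumes "quasi_projective_variety X"
    and "positive_dimensional X"
    and "pseudo_brody_hyperbolic X"
  shows "\<not> h_special X"
proof
  assume hs: "h_special X"
  obtain A B where AB: "proj_closed A" "proj_closed B" "X = A - B"
    using assms(1) unfolding quasi_projective_variety_def locally_closed_proj_def by blast
  have Xnz: "\<forall>x\<in>X. x \<noteq> 0" using AB unfolding proj_closed_def by auto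
  obtain E where E: "closed_in_X X E" "E \<noteq> X"
      "\<forall>g. holo_curve X g \<and> nonconstant_curve g \<longrightarrow> range g \<subseteq> E"
    using assms(3) unfolding pseudo_brody_hyperbolic_def by blast
  obtain C where C: "proj_closed C" "E = X \<inter> C" using E(1) unfolding closed_in_X_def by blast
  obtain FC where FC: "\<forall>(d,p)\<in>FC. hom_poly d p" "C = {x. x \<noteq> 0 \<and> (\<forall>(d,p)\<in>FC. p x = 0)}"
    using C(1) unfolding proj_closed_def by blast
  obtain x0 where x0: "x0 \<in> X" "x0 \<notin> C" using E(2) C(2) by blast
  then obtain d f where df: "(d,f) \<in> FC" "f x0 \<noteq> 0" using Xnz FC(2) by blast
  have fhom: "hom_poly d f" using FC(1) df(1) by blast
  have fC: "\<forall>z\<in>C. f z = 0" using FC(2) df(1) by blast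
  obtain Z0 Z1 where Z: "closed_in_X X Z0" "closed_in_X X Z1" "zar_irreducible Z0" "Z0 \<subset> Z1"
    using assms(2) unfolding positive_dimensional_def by blast
  obtain C0 where C0: "proj_closed C0" "Z0 = X \<inter> C0" using Z(1) unfolding closed_in_X_def by blast
  obtain z0 where z0: "z0 \<in> Z0" using Z(3) unfolding zar_irreducible_def by blast
  obtain z1 where z1: "z1 \<in> Z1" "z1 \<notin> Z0" using Z(4) by blast
  have z1X: "z1 \<in> X" using Z(2) z1(1) unfolding closed_in_X_def by blast
  have z0X: "z0 \<in> X" using z0 C0(2) by blast
  have npe: "\<not> proj_eq z0 z1"
  proof
    assume "proj_eq z0 z1"
    then obtain c where c: "c \<noteq> 0" "z1 = (\<chi> i. c * z0 $ i)" unfolding proj_eq_def by blast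
    have "z1 \<in> C0" using proj_closed_cone[OF C0(1) _ c(1), of z0] z0 C0(2) c(2) by blast
    then show False using z1 z1X C0(2) by blast
  qed
  have "\<not> (proj_eq x0 z0 \<and> proj_eq x0 z1)"
  proof
    assume a: "proj_eq x0 z0 \<and> proj_eq x0 z1"
    then have "proj_eq z0 z1" using proj_eq_trans[OF proj_eq_sym[of x0 z0]] by blast
    then show False using npe by blast
  qed
  then obtain y0 where y0: "y0 \<in> X" "\<not> proj_eq x0 y0"
    using z0X z1X by blast
  define F2 where "F2 = {(\<lambda>(x::complex^'n) y. f x * (x$i*y$j - x$j*y$i)) | i j. True}"
  define Z2 where "Z2 = {(x::complex^'n,y). x \<noteq> 0 \<and> y \<noteq> 0 \<and> (\<forall>p\<in>F2. p x y = 0)}"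
  have F2b: "\<forall>p\<in>F2. bihom_poly p" unfolding F2_def using linef_bihom[OF fhom] by blast
  have Z2c: "proj2_closed Z2" unfolding proj2_closed_def
    by (rule exI[of _ F2]) (use F2b Z2_def in simp)
  have RZ: "{(x,y). x \<in> X \<and> y \<in> X \<and> h_rel X x y} \<subseteq> Z2"
  proof safe
    fix x y assume xy: "x \<in> X" "y \<in> X" "h_rel X x y"
    have "f x = 0 \<or> proj_eq x y"
      by (rule chain[OF xy(3) C(1) _ fC fhom]) (use E(3) C(2) in blast)
    then have disj: "f x = 0 \<or> proj_eq x y" .
    have m: "\<forall>i j. f x * (x$i*y$j - x$j*y$i) = 0"
    proof (intro allI)
      fix i j
      show "f x * (x$i*y$j - x$j*y$i) = 0" using disj proj_eq_par[of x y i j] by auto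
    qed
    have "\<forall>p\<in>F2. p x y = 0"
    proof
      fix p assume "p \<in> F2"
      then obtain i j where "p = (\<lambda>(x::complex^'n) y. f x * (x$i*y$j - x$j*y$i))" unfolding F2_def by blast
      then show "p x y = 0" using m[rule_format, of i j] by simp
    qed
    moreover have "x \<noteq> 0" "y \<noteq> 0" using xy Xnz by auto
    ultimately show "(x, y) \<in> Z2" unfolding Z2_def by simp
  qed
  have "(x0,y0) \<in> Z2" using hs x0(1) y0(1) closure2_sub[OF Z2c RZ] unfolding h_special_def by blast
  then have Z2m: "\<forall>p\<in>F2. p x0 y0 = 0" unfolding Z2_def by simp
  have "\<forall>i j. f x0 * (x0$i*y0$j - x0$j*y0$i) = 0"
  proof (intro allI)
    fix i j
    have "(\<lambda>(x::complex^'n) y. f x * (x$i*y$j - x$j*y$i)) \<in> F2" unfolding F2_def by blast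
    then show "f x0 * (x0$i*y0$j - x0$j*y0$i) = 0" using Z2m by fastforce
  qed
  then have "\<forall>i j. x0$i*y0$j = x0$j*y0$i" using df(2) by simp
  then have "proj_eq x0 y0" using par_proj_eq Xnz x0(1) y0(1) by blast
  then show False using y0(2) by blast
qed

end
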